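(* Assume the setup in the context. Suppose $\{\mathcal{Z}_k\}_{k=1}^\infty$ is a sequence of compact subsets of $\mathcal{Z}$ with $P(\mathcal{Z}_k)\to1$ as $k\to\infty$, and suppose that for every $k\in\mathbb{N}$, every $j_1,j_2\in J$, and every $K\in\mathcal{K}_{j_1}$, $C\in\mathcal{K}_{j_2}$ with $K\cap C=\emptyset$, $$P\big(\{z\in\mathcal{Z}_k: V(T,z)=V(K,z)=V(C,z)\}\big)=0.$$ Then the argmin of $Q(t,z)$ over $t\in T$ is unique almost surely.
   Context: $z$ is an absolutely continuous random vector in $\mathbb{R}^{d_z}$ with distribution $P$, and $\mathcal{Z}\subset\mathbb{R}^{d_z}$ is measurable with $P(z\in\mathcal{Z})=1$. $T=\bigcup_{j\in J}T_j$ is a disjoint union of finitely or countably many second-countable Hausdorff manifolds, possibly with boundary or corner. $Q:T\times\mathcal{Z}\to\mathbb{R}$ is continuous on each $T_j\times\mathcal{Z}$. For $K\subset T$, $V(K,z)=\inf_{t\in K}Q(t,z)$. For each $j\in J$, $\mathcal{K}_j$ is a countable collection of compact neighborhoods in $T_j$ that separates points: for any $j_1,j_2\in J$ and any $t\in T_{j_1}$, $s\in T_{j_2}$ with $t\neq s$, there exist $K\in\mathcal{K}_{j_1}$ and $C\in\mathcal{K}_{j_2}$ with $K\cap C=\emptyset$, $t\in K$, $s\in C$. *)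

theory Defs
  imports "HOL-Probability.Probability"
begin

text \<open>Model space for n-manifolds with corners: the closed orthant [0,inf)^n
  inside the abstract Euclidean space of dimension n.  (Open subsets of it
  also cover the boundaryless and boundary cases.)\<close>
definition corner_model :: "nat \<Rightarrow> (nat \<Rightarrow> real) topology" where
  "corner_model n = subtopology (Euclidean_space n) {x. \<forall>i. 0 \<le> x i}"

definition manifold_with_corners :: "'a topology \<Rightarrow> nat \<Rightarrow> bool" where
  "manifold_with_corners X n \<longleftrightarrow>
     Hausdorff_space X \<and> second_countable X \<and>
     (\<forall>x\<in>topspace X. \<exists>U W. openin X U \<and> x \<in> U \<and> openin (corner_model n) W \<and>
        subtopology X U homeomorphic_space subtopology (corner_model n) W)"

definition compact_nbhd :: "'a topology \<Rightarrow> 'a set \<Rightarrow> bool" where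
  "compact_nbhd X K \<longleftrightarrow> compactin X K \<and> X interior_of K \<noteq> {}"

definition Vinf :: "('a \<Rightarrow> 'z \<Rightarrow> real) \<Rightarrow> 'a set \<Rightarrow> 'z \<Rightarrow> ereal" where
  "Vinf Q K z = (INF t\<in>K. ereal (Q t z))"

definition argmin_set :: "('a \<Rightarrow> 'z \<Rightarrow> real) \<Rightarrow> 'a set \<Rightarrow> 'z \<Rightarrow> 'a set" where
  "argmin_set Q T z = {t\<in>T. \<forall>u\<in>T. Q t z \<le> Q u z}"

end

theory Submission
  imports Defs
begin

theorem lemma2:
  fixes P :: "'z::euclidean_space measure"
    and Zset :: "'z set"
    and J :: "'j set"
    and Tj :: "'j \<Rightarrow> 'a set"
    and top :: "'j \<Rightarrow> 'a topology"
    and Q :: "'a \<Rightarrow> 'z \<Rightarrow> real"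
    and KK :: "'j \<Rightarrow> 'a set set"
    and Zk :: "nat \<Rightarrow> 'z set"
  assumes P_prob: "prob_space P"
    and P_borel: "sets P = sets borel"
    and P_ac: "absolutely_continuous lborel P"
    and Z_meas: "Zset \<in> sets P"
    and Z_full: "measure P Zset = 1"
    and J_countable: "countable J"
    and Tj_top: "\<And>j. j \<in> J \<Longrightarrow> topspace (top j) = Tj j"
    and Tj_mfd: "\<And>j. j \<in> J \<Longrightarrow> \<exists>n. manifold_with_corners (top j) n"
    and Tj_disj: "\<And>i j. i \<in> J \<Longrightarrow> j \<in> J \<Longrightarrow> i \<noteq> j \<Longrightarrow> Tj i \<inter> Tj j = {}"
    and Q_cont: "\<And>j. j \<in> J \<Longrightarrow>
        continuous_map (prod_topology (top j) (top_of_set Zset)) euclideanreal (\<lambda>(t, z). Q t z)"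
    and KK_countable: "\<And>j. j \<in> J \<Longrightarrow> countable (KK j)"
    and KK_nbhd: "\<And>j K. j \<in> J \<Longrightarrow> K \<in> KK j \<Longrightarrow> compact_nbhd (top j) K"
    and KK_sep: "\<And>j1 j2 t s. j1 \<in> J \<Longrightarrow> j2 \<in> J \<Longrightarrow> t \<in> Tj j1 \<Longrightarrow> s \<in> Tj j2 \<Longrightarrow> t \<noteq> s \<Longrightarrow>
        \<exists>K\<in>KK j1. \<exists>C\<in>KK j2. K \<inter> C = {} \<and> t \<in> K \<and> s \<in> C"
    and Zk_compact: "\<And>k. compact (Zk k)"
    and Zk_sub: "\<And>k. Zk k \<subseteq> Zset"
    and Zk_lim: "(\<lambda>k. measure P (Zk k)) \<longlonglongrightarrow> 1"
    and null_ties: "\<And>k j1 j2 K C. j1 \<in> J \<Longrightarrow> j2 \<in> J \<Longrightarrow> K \<in> KK j1 \<Longrightarrow> C \<in> KK j2 \<Longrightarrow>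
        K \<inter> C = {} \<Longrightarrow>
        {z \<in> Zk k. Vinf Q (\<Union>j\<in>J. Tj j) z = Vinf Q K z \<and> Vinf Q K z = Vinf Q C z} \<in> null_sets P"
  shows "AE z in P. \<forall>t\<in>argmin_set Q (\<Union>j\<in>J. Tj j) z. \<forall>s\<in>argmin_set Q (\<Union>j\<in>J. Tj j) z. t = s"
proof -
  define T where "T = (\<Union>j\<in>J. Tj j)"
  define I where "I = {(k::nat,j1,j2,K,C). j1 \<in> J \<and> j2 \<in> J \<and> K \<in> KK j1 \<and> C \<in> KK j2 \<and> K \<inter> C = {}}"
  define N where "N = (\<lambda>(k::nat,j1::'j,j2::'j,K::'a set,C::'a set).
     {z \<in> Zk k. Vinf Q T z = Vinf Q K z \<and> Vinf Q K z = Vinf Q C z})"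
  have cI: "countable I"
  proof (rule countable_subset)
    show "I \<subseteq> (UNIV::nat set) \<times> (SIGMA j1:J. SIGMA j2:J. KK j1 \<times> KK j2)" unfolding I_def by auto
    show "countable ((UNIV::nat set) \<times> (SIGMA j1:J. SIGMA j2:J. KK j1 \<times> KK j2))"
      using J_countable KK_countable by (intro countable_SIGMA) (auto intro: countableI_type)
  qed
  have N1: "(\<Union>i\<in>I. N i) \<in> null_sets P"
    by (rule null_sets_UN'[OF cI]) (auto simp: I_def N_def T_def intro: null_ties)
  interpret prob_space P by (rule P_prob)
  have Zs: "Zk k \<in> sets P" for k
    using P_borel Zk_compact compact_imp_closed borel_closed by metis
  define U where "U = (\<Union>k. Zk k)"
  have Us: "U \<in> sets P" unfolding U_def using Zs by auto
  have "1 \<le> measure P U"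
  proof (rule LIMSEQ_le_const2[OF Zk_lim])
    show "\<exists>N. \<forall>n\<ge>N. measure P (Zk n) \<le> measure P U"
      using Us Zs by (auto simp: U_def intro!: finite_measure_mono)
  qed
  hence "measure P U = 1" using prob_le_1 by (metis antisym)
  hence "measure P (space P - U) = 0" using prob_compl[OF Us] by simp
  hence N2: "space P - U \<in> null_sets P"
    using Us by (intro null_setsI) (auto simp: emeasure_eq_measure)
  show ?thesis unfolding T_def[symmetric]
  proof (rule AE_I'[OF null_sets.Un[OF N1 N2]])
    show "{z \<in> space P. \<not> (\<forall>t\<in>argmin_set Q T z. \<forall>s\<in>argmin_set Q T z. t = s)}
       \<subseteq> (\<Union>i\<in>I. N i) \<union> (space P - U)"
    proof
      fix z assume zin: "z \<in> {z \<in> space P. \<not> (\<forall>t\<in>argmin_set Q T z. \<forall>s\<in>argmin_set Q T z. t = s)}"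
      show "z \<in> (\<Union>i\<in>I. N i) \<union> (space P - U)"
      proof (cases "z \<in> U")
        case False thus ?thesis using zin by auto
      next
        case True
        then obtain k where zk: "z \<in> Zk k" unfolding U_def by auto
        from zin obtain t s where ts: "t \<in> argmin_set Q T z" "s \<in> argmin_set Q T z" "t \<noteq> s" by auto
        then obtain j1 j2 where j: "j1 \<in> J" "j2 \<in> J" "t \<in> Tj j1" "s \<in> Tj j2"
          by (auto simp: argmin_set_def T_def)
        obtain K C where KC: "K \<in> KK j1" "C \<in> KK j2" "K \<inter> C = {}" "t \<in> K" "s \<in> C"
          using KK_sep[OF j ts(3)] by blast
        have KT: "K \<subseteq> T" using KK_nbhd[OF j(1) KC(1)] Tj_top[OF j(1)] j(1)
          unfolding compact_nbhd_def T_def by (auto dest: compactin_subset_topspace)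
        have CT: "C \<subseteq> T" using KK_nbhd[OF j(2) KC(2)] Tj_top[OF j(2)] j(2)
          unfolding compact_nbhd_def T_def by (auto dest: compactin_subset_topspace)
        have minv: "Vinf Q A z = ereal (Q x z)" if "x \<in> A" "A \<subseteq> T" "x \<in> argmin_set Q T z" for A x
          unfolding Vinf_def
        proof (rule antisym)
          show "(INF u\<in>A. ereal (Q u z)) \<le> ereal (Q x z)" using that(1) by (rule INF_lower)
          show "ereal (Q x z) \<le> (INF u\<in>A. ereal (Q u z))"
            using that by (intro INF_greatest) (auto simp: argmin_set_def)
        qed
        have "Vinf Q T z = ereal (Q t z)" using minv[of t T] ts by (auto simp: argmin_set_def)
        moreover have "Vinf Q K z = ereal (Q t z)" using minv[OF KC(4) KT ts(1)] .
        moreover have "Vinf Q C z = ereal (Q s z)" using minv[OF KC(5) CT ts(2)] .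
        moreover have "Q t z = Q s z" using ts by (force simp: argmin_set_def intro: antisym)
        ultimately have "z \<in> N (k,j1,j2,K,C)" using zk by (simp add: N_def)
        moreover have "(k,j1,j2,K,C) \<in> I" using j KC by (simp add: I_def)
        ultimately show ?thesis by blast
      qed
    qed
  qed
qed

end
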